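(* Let $M$ be a globally hyperbolic developable conformally flat spacetime of dimension $n\ge3$ with developing map $D:M\to\widetilde{Ein}_{1,n-1}$, and assume $M$ has no conjugate points. Then for every $p\in M$, the restriction of $D$ to the causal past $J^-(p)$ is injective.
   Context: $\widetilde{Ein}_{1,n-1}$ denotes the universal cover of the Einstein universe, conformally identified with $\mathbb{S}^{n-1}\times\mathbb{R}$ with the conformal class of $d\sigma^2-dt^2$, time-oriented by $\partial_t$. Let $\sigma(x,t)=(-x,t+\pi)$; two points of $\widetilde{Ein}_{1,n-1}$ are conjugate if one is the image of the other under $\sigma$. A conformally flat spacetime $M$ is developable if it admits a developing map: a conformal, time-orientation preserving local diffeomorphism $D:M\to\widetilde{Ein}_{1,n-1}$; two points of $M$ are conjugate if their images under $D$ are conjugate. *)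

theory Defs
  imports "HOL-Analysis.Analysis"
begin

text \<open>Universal cover of the Einstein universe: S^{n-1} x R, S^{n-1} the unit sphere of real^'n.\<close>
definition ein_univ :: "((real^'n) \<times> real) set" where
  "ein_univ = {(x, t). norm x = 1}"

definition sph_dist :: "real^'n \<Rightarrow> real^'n \<Rightarrow> real" where
  "sph_dist x y = arccos (x \<bullet> y)"

definition ein_sigma :: "(real^'n) \<times> real \<Rightarrow> (real^'n) \<times> real" where
  "ein_sigma p = (- fst p, snd p + pi)"

text \<open>Future-directed causal curves in S^{n-1} x R with the conformal class of
  d sigma^2 - dt^2, time oriented by d/dt (parametrised on [0,1]).\<close>
definition ein_future_causal :: "(real \<Rightarrow> (real^'n) \<times> real) \<Rightarrow> bool" where
  "ein_future_causal c \<longleftrightarrow>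
     continuous_on {0..1} c \<and> (\<forall>s\<in>{0..1}. c s \<in> ein_univ) \<and>
     (\<forall>s1 s2. 0 \<le> s1 \<and> s1 \<le> s2 \<and> s2 \<le> 1 \<longrightarrow>
        sph_dist (fst (c s1)) (fst (c s2)) \<le> snd (c s2) - snd (c s1))"

text \<open>Developing map: a local homeomorphism into the Einstein universe; the conformal
  structure and time orientation of M are the ones pulled back by D.\<close>
definition developing_map :: "('m::topological_space \<Rightarrow> (real^'n) \<times> real) \<Rightarrow> bool" where
  "developing_map D \<longleftrightarrow> (\<forall>p. D p \<in> ein_univ) \<and>
     (\<forall>p. \<exists>U. open U \<and> p \<in> U \<and> openin (top_of_set ein_univ) (D ` U) \<and>
          (\<exists>g. homeomorphism U (D ` U) D g))"

definition causal_curve :: "('m::topological_space \<Rightarrow> (real^'n) \<times> real) \<Rightarrow> (real \<Rightarrow> 'm) \<Rightarrow> bool" where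
  "causal_curve D \<gamma> \<longleftrightarrow> continuous_on {0..1} \<gamma> \<and> ein_future_causal (D \<circ> \<gamma>)"

definition causal_past :: "('m::topological_space \<Rightarrow> (real^'n) \<times> real) \<Rightarrow> 'm \<Rightarrow> 'm set" where
  "causal_past D p = {q. \<exists>\<gamma>. causal_curve D \<gamma> \<and> \<gamma> 0 = q \<and> \<gamma> 1 = p}"

definition causal_future :: "('m::topological_space \<Rightarrow> (real^'n) \<times> real) \<Rightarrow> 'm \<Rightarrow> 'm set" where
  "causal_future D p = {q. \<exists>\<gamma>. causal_curve D \<gamma> \<and> \<gamma> 0 = p \<and> \<gamma> 1 = q}"

definition causal_spacetime :: "('m::topological_space \<Rightarrow> (real^'n) \<times> real) \<Rightarrow> bool" where
  "causal_spacetime D \<longleftrightarrow>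
     (\<forall>\<gamma>. causal_curve D \<gamma> \<and> \<gamma> 0 = \<gamma> 1 \<longrightarrow> (\<forall>s\<in>{0..1}. \<gamma> s = \<gamma> 0))"

definition globally_hyperbolic :: "('m::topological_space \<Rightarrow> (real^'n) \<times> real) \<Rightarrow> bool" where
  "globally_hyperbolic D \<longleftrightarrow> causal_spacetime D \<and>
     (\<forall>p q. compact (causal_future D p \<inter> causal_past D q))"

definition conjugate_pts :: "('m \<Rightarrow> (real^'n) \<times> real) \<Rightarrow> 'm \<Rightarrow> 'm \<Rightarrow> bool" where
  "conjugate_pts D p q \<longleftrightarrow> D q = ein_sigma (D p) \<or> D p = ein_sigma (D q)"

end

theory Submission
  imports Defs
begin

abbreviation sd :: "real^'n \<Rightarrow> real^'n \<Rightarrow> real" where "sd \<equiv> sph_dist"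

lemma inner_unit_bounds:
  fixes x y :: "real^'n"
  assumes "norm x = 1" "norm y = 1"
  shows "-1 \<le> x \<bullet> y" "x \<bullet> y \<le> 1"
proof -
  have "\<bar>x \<bullet> y\<bar> \<le> norm x * norm y" by (rule Cauchy_Schwarz_ineq2)
  then show "-1 \<le> x \<bullet> y" "x \<bullet> y \<le> 1" using assms by auto
qed

lemma sd_nonneg: "norm x = 1 \<Longrightarrow> norm y = 1 \<Longrightarrow> 0 \<le> sd x y"
  unfolding sph_dist_def using inner_unit_bounds[of x y] by (simp add: arccos_lbound)

lemma sd_le_pi: "norm x = 1 \<Longrightarrow> norm y = 1 \<Longrightarrow> sd x y \<le> pi"
  unfolding sph_dist_def using inner_unit_bounds[of x y] by (simp add: arccos_ubound)

lemma sd_sym: "sd x y = sd y x"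
  unfolding sph_dist_def by (simp add: inner_commute)

lemma inner_self_unit: "norm (x::real^'n) = 1 \<Longrightarrow> x \<bullet> x = 1"
  by (metis norm_eq_1)

lemma sd_self: "norm x = 1 \<Longrightarrow> sd x x = 0"
  unfolding sph_dist_def by (simp add: inner_self_unit)

lemma cos_sd: "norm x = 1 \<Longrightarrow> norm y = 1 \<Longrightarrow> cos (sd x y) = x \<bullet> y"
  unfolding sph_dist_def using inner_unit_bounds[of x y] by (simp add: cos_arccos)

lemma sin_sd_nonneg: "norm x = 1 \<Longrightarrow> norm y = 1 \<Longrightarrow> 0 \<le> sin (sd x y)"
  using sd_nonneg sd_le_pi sin_ge_zero by blast

lemma unit_eq_iff_inner:
  fixes x y :: "real^'n"
  assumes "norm x = 1" "norm y = 1" "x \<bullet> y = 1"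
  shows "x = y"
proof -
  have "norm (x - y) ^ 2 = x \<bullet> x - 2 * (x \<bullet> y) + y \<bullet> y"
    by (simp add: power2_norm_eq_inner inner_diff_left inner_diff_right inner_commute)
  also have "\<dots> = 0" using assms by (simp add: inner_self_unit)
  finally show ?thesis by simp
qed

lemma sd_eq_0: "norm x = 1 \<Longrightarrow> norm y = 1 \<Longrightarrow> sd x y = 0 \<Longrightarrow> x = y"
  using cos_sd unit_eq_iff_inner by fastforce

lemma sd_eq_pi:
  fixes x y :: "real^'n"
  assumes "norm x = 1" "norm y = 1" "sd x y = pi"
  shows "y = - x"
proof -
  have "x \<bullet> y = -1" using cos_sd[OF assms(1,2)] assms(3) by simp
  have "norm (x + y) ^ 2 = x \<bullet> x + 2 * (x \<bullet> y) + y \<bullet> y"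
    by (simp add: power2_norm_eq_inner inner_add_left inner_add_right inner_commute)
  also have "\<dots> = 0" using assms \<open>x \<bullet> y = -1\<close> by (simp add: inner_self_unit)
  finally have "x + y = 0" by simp
  then show ?thesis by (simp add: eq_neg_iff_add_eq_0 add.commute)
qed

lemma norm_le_sd:
  fixes x y :: "real^'n"
  assumes "norm x = 1" "norm y = 1"
  shows "norm (x - y) \<le> sd x y"
proof -
  let ?d = "sd x y"
  have "norm (x - y) ^ 2 = x \<bullet> x - 2 * (x \<bullet> y) + y \<bullet> y"
    by (simp add: power2_norm_eq_inner inner_diff_left inner_diff_right inner_commute)
  also have "\<dots> = 2 - 2 * cos ?d" using assms by (simp add: inner_self_unit cos_sd)
  also have "cos ?d = 1 - 2 * sin (?d/2) ^ 2"
    using cos_double_sin[of "?d/2"] by simp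
  also have "2 - 2 * (1 - 2 * sin (?d/2) ^ 2) = (2 * sin (?d/2))^2" by (simp add: power2_eq_square)
  finally have e: "norm (x - y) = \<bar>2 * sin (?d/2)\<bar>"
    by (metis norm_ge_zero real_sqrt_abs real_sqrt_unique)
  have "\<bar>sin (?d/2)\<bar> \<le> \<bar>?d/2\<bar>" by (rule abs_sin_x_le_abs_x)
  then show ?thesis using e sd_nonneg[OF assms] by simp
qed

lemma sd_triangle:
  fixes x y z :: "real^'n"
  assumes x: "norm x = 1" and y: "norm y = 1" and z: "norm z = 1"
  shows "sd x z \<le> sd x y + sd y z"
proof (cases "sd x y + sd y z \<le> pi")
  case False
  then show ?thesis using sd_le_pi[OF x z] by simp
next
  case True
  define a where "a = sd x y"
  define b where "b = sd y z"
  define x' where "x' = x - cos a *\<^sub>R y"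
  define z' where "z' = z - cos b *\<^sub>R y"
  have ca: "cos a = x \<bullet> y" using cos_sd[OF x y] a_def by simp
  have cb: "cos b = y \<bullet> z" using cos_sd[OF y z] b_def by simp
  have sa: "0 \<le> sin a" using sin_sd_nonneg[OF x y] a_def by simp
  have sb: "0 \<le> sin b" using sin_sd_nonneg[OF y z] b_def by simp
  have yy: "y \<bullet> y = 1" using y by (simp add: inner_self_unit)
  have nx: "norm x' ^ 2 = sin a ^ 2"
    unfolding x'_def power2_norm_eq_inner
    using x ca[symmetric] yy sin_cos_squared_add3[of a] by (simp add: inner_diff_left inner_diff_right inner_commute inner_self_unit
        power2_eq_square algebra_simps)
  have nz: "norm z' ^ 2 = sin b ^ 2"
    unfolding z'_def power2_norm_eq_inner
    using z cb[symmetric] yy sin_cos_squared_add3[of b] by (simp add: inner_diff_left inner_diff_right inner_commute inner_self_unit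
        power2_eq_square algebra_simps)
  have nx': "norm x' = sin a" using nx sa by (metis norm_ge_zero power2_eq_imp_eq)
  have nz': "norm z' = sin b" using nz sb by (metis norm_ge_zero power2_eq_imp_eq)
  have xz: "x \<bullet> z = cos a * cos b + x' \<bullet> z'"
    unfolding x'_def z'_def using ca cb yy
    by (simp add: inner_diff_left inner_diff_right inner_commute algebra_simps)
  have "- (norm x' * norm z') \<le> x' \<bullet> z'"
    using norm_cauchy_schwarz[of "-x'" z'] by simp
  then have "cos (a + b) \<le> x \<bullet> z" using xz nx' nz' by (simp add: cos_add)
  then have "arccos (x \<bullet> z) \<le> arccos (cos (a + b))"
    apply (intro arccos_le_arccos) using inner_unit_bounds[OF x z] by auto
  also have "\<dots> = a + b"
    using True a_def b_def sd_nonneg[OF x y] sd_nonneg[OF y z] by (simp add: arccos_cos)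
  finally show ?thesis unfolding a_def b_def sph_dist_def .
qed


lemma sd_eq_case:
  fixes x y z :: "real^'n"
  assumes x: "norm x = 1" and y: "norm y = 1" and z: "norm z = 1"
    and eq: "sd x z = sd x y + sd y z" and d0: "0 < sd y z" and dpi: "sd y z < pi"
  shows "x = cos (sd x y) *\<^sub>R y - (sin (sd x y) / sin (sd y z)) *\<^sub>R (z - cos (sd y z) *\<^sub>R y)"
proof -
  define a where "a = sd x y"
  define d where "d = sd y z"
  have sd: "0 < sin d" using d0 dpi d_def sin_gt_zero by blast
  define f where "f = (1 / sin d) *\<^sub>R (z - cos d *\<^sub>R y)"
  have xx: "x \<bullet> x = 1" "y \<bullet> y = 1" "z \<bullet> z = 1" using x y z by (auto simp: inner_self_unit)
  have ca: "x \<bullet> y = cos a" using cos_sd[OF x y] a_def by simp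
  have cd: "y \<bullet> z = cos d" using cos_sd[OF y z] d_def by simp
  have cxz: "x \<bullet> z = cos (a + d)" using cos_sd[OF x z] eq a_def d_def by simp
  have fy: "f \<bullet> y = 0" unfolding f_def using xx cd
    by (simp add: inner_diff_left inner_diff_right inner_commute)
  have ff: "f \<bullet> f = 1"
  proof -
    have "(z - cos d *\<^sub>R y) \<bullet> (z - cos d *\<^sub>R y) = 1 - cos d ^ 2"
      using xx cd by (simp add: inner_diff_left inner_diff_right inner_commute power2_eq_square)
    also have "\<dots> = sin d ^ 2" by (simp add: sin_squared_eq)
    finally show ?thesis unfolding f_def using sd by (simp add: power2_eq_square)
  qed
  have xf: "x \<bullet> f = - sin a"
  proof -
    have "x \<bullet> f = (x \<bullet> z - cos d * cos a) / sin d" unfolding f_def using ca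
      by (simp add: inner_diff_right)
    also have "\<dots> = - sin a" using cxz sd by (simp add: cos_add field_simps)
    finally show ?thesis .
  qed
  define w where "w = cos a *\<^sub>R y - sin a *\<^sub>R f"
  have xw: "x \<bullet> w = 1" unfolding w_def using ca xf
    by (simp add: inner_diff_right power2_eq_square[symmetric]) 
  have ww: "w \<bullet> w = 1" unfolding w_def using xx fy ff
    by (simp add: inner_diff_right inner_diff_left inner_commute power2_eq_square[symmetric])
  have "norm (x - w) ^ 2 = 0"
    unfolding power2_norm_eq_inner using xx xw ww
    by (simp add: inner_diff_right inner_diff_left inner_commute)
  then have "x = w" by simp
  then show ?thesis unfolding w_def f_def a_def d_def by (simp add: scaleR_scaleR)
qed

lemma sd_unique_mid:
  fixes z v y y' :: "real^'n"
  assumes z: "norm z = 1" and v: "norm v = 1" and y: "norm y = 1" and y': "norm y' = 1"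
    and T: "sd z v < pi"
    and a: "sd z y = sd z y'" and b: "sd y v = sd y' v" and s: "sd z y + sd y v = sd z v"
  shows "y = y'"
proof -
  consider "sd y v = 0" | "sd z y = 0" | "0 < sd y v \<and> 0 < sd z y"
    using sd_nonneg[OF y v] sd_nonneg[OF z y] by linarith
  then show ?thesis
  proof cases
    case 1
    then show ?thesis using b sd_eq_0 y y' v by metis
  next
    case 2
    then have "sd z y' = 0" using a by simp
    then show ?thesis using 2 sd_eq_0 z y y' by metis
  next
    case 3
    define A where "A = sd z y"
    define B where "B = sd y v"
    have AB: "0 < A" "0 < B" "A + B < pi" using 3 A_def B_def T s by auto
    have sB: "0 < sin B" using AB sin_gt_zero by auto
    have sT: "0 < sin (A + B)" using AB sin_gt_zero by auto
    have key: "\<And>w. norm w = 1 \<Longrightarrow> sd z w = A \<Longrightarrow> sd w v = B \<Longrightarrow>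
                 w = (1 / sin (A + B)) *\<^sub>R (sin B *\<^sub>R z + sin A *\<^sub>R v)"
    proof -
      fix w :: "real^'n" assume w: "norm w = 1" and wA: "sd z w = A" and wB: "sd w v = B"
      have "z = cos A *\<^sub>R w - (sin A / sin B) *\<^sub>R (v - cos B *\<^sub>R w)"
        using sd_eq_case[OF z w v] wA wB s A_def B_def AB by simp
      then have "sin B *\<^sub>R z = sin B *\<^sub>R (cos A *\<^sub>R w - (sin A / sin B) *\<^sub>R (v - cos B *\<^sub>R w))"
        by simp
      also have "\<dots> = (sin B * cos A + sin A * cos B) *\<^sub>R w - sin A *\<^sub>R v"
        using sB by (simp add: algebra_simps scaleR_diff_right)
      also have "sin B * cos A + sin A * cos B = sin (A + B)" by (simp add: sin_add)
      finally have "sin (A + B) *\<^sub>R w = sin B *\<^sub>R z + sin A *\<^sub>R v" by (simp add: algebra_simps)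
      moreover have "w = (1 / sin (A + B)) *\<^sub>R (sin (A + B) *\<^sub>R w)" using sT by simp
      ultimately show "w = (1 / sin (A + B)) *\<^sub>R (sin B *\<^sub>R z + sin A *\<^sub>R v)"
        by simp
    qed
    have e1: "y = (1 / sin (A + B)) *\<^sub>R (sin B *\<^sub>R z + sin A *\<^sub>R v)"
      using key[OF y] A_def B_def by blast
    have e2: "y' = (1 / sin (A + B)) *\<^sub>R (sin B *\<^sub>R z + sin A *\<^sub>R v)"
      by (rule key[OF y']) (simp_all add: A_def B_def a b)
    show ?thesis using e1 e2 by metis
  qed
qed


lemma gcl_trig:
  fixes a b d :: real
  assumes "sin d \<noteq> 0"
  shows "(cos a + sin a * cos d / sin d) * (- sin b / sin d) + (- sin a / sin d) * (cos b + sin b * cos d / sin d)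
     + ((cos a + sin a * cos d / sin d) * (cos b + sin b * cos d / sin d) + (- sin a / sin d) * (- sin b / sin d)) * cos d
     = cos (a + d + b)"
proof -
  have e: "sin d * sin d = 1 - cos d * cos d" using sin_cos_squared_add3[of d] by linarith
  have c: "cos (a + d + b) = (cos a * cos b - sin a * sin b) * cos d - (sin a * cos b + cos a * sin b) * sin d"
    by (simp add: cos_add sin_add algebra_simps)
  show ?thesis unfolding c using assms
    apply (simp add: field_simps)
    using e by algebra
qed

lemma lin2_aux:
  fixes x1 x2 :: "real^'n"
  shows "p *\<^sub>R x1 - c *\<^sub>R (x2 - q *\<^sub>R x1) = (p + c * q) *\<^sub>R x1 + (- c) *\<^sub>R x2"
  by (simp add: scaleR_diff_right scaleR_add_left)

lemma sd_geodesic_cont: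
  fixes x0 x1 x2 x3 :: "real^'n"
  assumes u0: "norm x0 = 1" and u1: "norm x1 = 1" and u2: "norm x2 = 1" and u3: "norm x3 = 1"
    and e1: "sd x0 x1 + sd x1 x2 = sd x0 x2" and e2: "sd x1 x2 + sd x2 x3 = sd x1 x3"
    and pos: "0 < sd x1 x2" and lt: "sd x0 x1 + sd x1 x2 + sd x2 x3 < pi"
  shows "sd x0 x3 = sd x0 x1 + sd x1 x2 + sd x2 x3"
proof -
  define a where "a = sd x0 x1"
  define d where "d = sd x1 x2"
  define b where "b = sd x2 x3"
  have a0: "0 \<le> a" "0 \<le> b" using sd_nonneg u0 u1 u2 u3 a_def b_def by auto
  have dpi: "d < pi" using lt a0 a_def b_def d_def by linarith
  have sdn: "sin d \<noteq> 0" using pos dpi d_def sin_gt_zero by fastforce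
  have h0: "x0 = cos a *\<^sub>R x1 - (sin a / sin d) *\<^sub>R (x2 - cos d *\<^sub>R x1)"
    using sd_eq_case[OF u0 u1 u2] e1 pos dpi a_def d_def by simp
  have h3: "x3 = cos b *\<^sub>R x2 - (sin b / sin d) *\<^sub>R (x1 - cos d *\<^sub>R x2)"
    using sd_eq_case[OF u3 u2 u1] e2 pos dpi b_def d_def by (simp add: sd_sym)
  define A where "A = cos a + sin a * cos d / sin d"
  define B where "B = - sin a / sin d"
  define C where "C = - sin b / sin d"
  define E where "E = cos b + sin b * cos d / sin d"
  have h0': "x0 = A *\<^sub>R x1 + B *\<^sub>R x2"
  proof -
    have "sin a * cos d / sin d = sin a / sin d * cos d" "- sin a / sin d = - (sin a / sin d)" by simp_all
    then show ?thesis using h0 lin2_aux[of "cos a" x1 "sin a / sin d" x2 "cos d"] A_def B_def by metis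
  qed
  have h3': "x3 = C *\<^sub>R x1 + E *\<^sub>R x2"
  proof -
    have "sin b * cos d / sin d = sin b / sin d * cos d" "- sin b / sin d = - (sin b / sin d)" by simp_all
    then show ?thesis using h3 lin2_aux[of "cos b" x2 "sin b / sin d" x1 "cos d"] C_def E_def by (metis add.commute)
  qed
  have i11: "x1 \<bullet> x1 = 1" and i22: "x2 \<bullet> x2 = 1" using u1 u2 by (auto simp: inner_self_unit)
  have i12: "x1 \<bullet> x2 = cos d" using cos_sd[OF u1 u2] d_def by simp
  have "x0 \<bullet> x3 = A * C + B * E + (A * E + B * C) * cos d"
    unfolding h0' h3' using i11 i22 i12
    by (simp add: inner_add_left inner_add_right inner_commute algebra_simps)
  also have "\<dots> = cos (a + d + b)" unfolding A_def B_def C_def E_def by (rule gcl_trig[OF sdn])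
  finally have "x0 \<bullet> x3 = cos (a + d + b)" .
  then have "sd x0 x3 = arccos (cos (a + d + b))" unfolding sph_dist_def by simp
  also have "\<dots> = a + d + b" using a0 pos d_def lt a_def b_def by (intro arccos_cos) auto
  finally show ?thesis using a_def b_def d_def by simp
qed


lemma slerp_exists:
  fixes x y :: "real^'n"
  assumes x: "norm x = 1" and y: "norm y = 1" and lt: "sd x y < pi"
  shows "\<exists>k::real \<Rightarrow> real^'n. continuous_on UNIV k \<and> k 0 = x \<and> k 1 = y \<and> (\<forall>s. norm (k s) = 1) \<and>
     (\<forall>s1 s2. 0 \<le> s1 \<longrightarrow> s1 \<le> s2 \<longrightarrow> s2 \<le> 1 \<longrightarrow> sd (k s1) (k s2) = (s2 - s1) * sd x y)"
proof (cases "sd x y = 0")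
  case True
  then have "y = x" using sd_eq_0[OF x y] by simp
  then show ?thesis using x True
    by (intro exI[of _ "\<lambda>s. x"]) (auto simp: sd_self)
next
  case False
  define a where "a = sd x y"
  have a0: "0 < a" "a < pi" using False sd_nonneg[OF x y] lt a_def by auto
  have sa: "0 < sin a" using a0 sin_gt_zero by blast
  define u where "u = (1 / sin a) *\<^sub>R (y - cos a *\<^sub>R x)"
  have xx: "x \<bullet> x = 1" "y \<bullet> y = 1" using x y by (auto simp: inner_self_unit)
  have xy: "x \<bullet> y = cos a" using cos_sd[OF x y] a_def by simp
  have xu: "x \<bullet> u = 0" unfolding u_def using xx xy
    by (simp add: inner_diff_right)
  have uu: "u \<bullet> u = 1"
  proof -
    have "(y - cos a *\<^sub>R x) \<bullet> (y - cos a *\<^sub>R x) = 1 - cos a ^ 2"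
      using xx xy by (simp add: inner_diff_left inner_diff_right inner_commute power2_eq_square)
    also have "\<dots> = sin a ^ 2" by (simp add: sin_squared_eq)
    finally show ?thesis unfolding u_def using sa by (simp add: power2_eq_square)
  qed
  define k where "k = (\<lambda>s. cos (s * a) *\<^sub>R x + sin (s * a) *\<^sub>R u)"
  have kk: "k s \<bullet> k t = cos ((t - s) * a)" for s t
  proof -
    have "k s \<bullet> k t = cos (s*a) * cos (t*a) + sin (s*a) * sin (t*a)"
      unfolding k_def using xx xu uu by (simp add: inner_add_left inner_add_right inner_commute)
    also have "\<dots> = cos (t*a - s*a)" by (simp add: cos_diff)
    also have "t*a - s*a = (t-s)*a" by (simp add: algebra_simps)
    finally show ?thesis .
  qed
  have nk: "norm (k s) = 1" for s
    using kk[of s s] by (simp add: norm_eq_sqrt_inner)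
  have "sin a *\<^sub>R u = y - cos a *\<^sub>R x" unfolding u_def using sa by simp
  then have k1: "k 1 = y" unfolding k_def by simp
  have k0: "k 0 = x" unfolding k_def by simp
  have ck: "continuous_on UNIV k" unfolding k_def by (intro continuous_intros)
  have "sd (k s1) (k s2) = (s2 - s1) * a" if "0 \<le> s1" "s1 \<le> s2" "s2 \<le> 1" for s1 s2
  proof -
    have "0 \<le> (s2 - s1) * a" "(s2 - s1) * a \<le> pi"
      using that a0 apply simp
      using that a0 mult_mono[of "s2 - s1" 1 a pi] by simp
    then show ?thesis unfolding sph_dist_def kk by (simp add: arccos_cos)
  qed
  then show ?thesis using ck k0 k1 nk a_def by blast
qed


definition le_E :: "(real^'n) \<times> real \<Rightarrow> (real^'n) \<times> real \<Rightarrow> bool" where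
  "le_E u w \<longleftrightarrow> sd (fst u) (fst w) \<le> snd w - snd u"

definition lt_E :: "(real^'n) \<times> real \<Rightarrow> (real^'n) \<times> real \<Rightarrow> bool" where
  "lt_E u w \<longleftrightarrow> sd (fst u) (fst w) < snd w - snd u"

lemma ein_univ_iff: "u \<in> ein_univ \<longleftrightarrow> norm (fst u) = 1"
  unfolding ein_univ_def by (cases u) auto

lemma le_E_trans:
  assumes "u \<in> ein_univ" "v \<in> ein_univ" "w \<in> ein_univ" "le_E u v" "le_E v w"
  shows "le_E u w"
  using assms sd_triangle[of "fst u" "fst v" "fst w"] unfolding le_E_def ein_univ_iff by linarith

lemma le_E_time: "u \<in> ein_univ \<Longrightarrow> w \<in> ein_univ \<Longrightarrow> le_E u w \<Longrightarrow> snd u \<le> snd w"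
  unfolding le_E_def ein_univ_iff using sd_nonneg[of "fst u" "fst w"] by linarith

lemma lt_imp_le_E: "lt_E u w \<Longrightarrow> le_E u w"
  unfolding le_E_def lt_E_def by simp

lemma efc_le:
  assumes "ein_future_causal c" "0 \<le> s1" "s1 \<le> s2" "s2 \<le> 1"
  shows "le_E (c s1) (c s2)"
  using assms unfolding ein_future_causal_def le_E_def by blast

lemma efc_in:
  assumes "ein_future_causal c" "0 \<le> s" "s \<le> 1"
  shows "c s \<in> ein_univ"
  using assms unfolding ein_future_causal_def by auto

lemma efc_time_mono:
  assumes "ein_future_causal c" "0 \<le> s1" "s1 \<le> s2" "s2 \<le> 1"
  shows "snd (c s1) \<le> snd (c s2)"
  using le_E_time efc_le[OF assms] efc_in assms by (meson order_trans)

context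
  fixes D :: "'m::t2_space \<Rightarrow> (real^'n) \<times> real"
begin

lemma dev_in: "developing_map D \<Longrightarrow> D p \<in> ein_univ"
  unfolding developing_map_def by blast

lemma dev_norm: "developing_map D \<Longrightarrow> norm (fst (D p)) = 1"
  using dev_in ein_univ_iff by blast

lemma dev_chart:
  assumes "developing_map D"
  shows "\<exists>U g. open U \<and> p \<in> U \<and> openin (top_of_set ein_univ) (D ` U) \<and> homeomorphism U (D ` U) D g"
  using assms unfolding developing_map_def by blast

lemma dev_cont:
  assumes "developing_map D"
  shows "continuous_on UNIV D"
proof -
  have "continuous (at p) D" for p
  proof -
    obtain U g where U: "open U" "p \<in> U" "homeomorphism U (D ` U) D g"
      using dev_chart[OF assms] by blast
    then have "continuous_on U D" using homeomorphism_cont1 by blast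
    then show ?thesis using U continuous_on_eq_continuous_at by blast
  qed
  then show ?thesis by (simp add: continuous_at_imp_continuous_on)
qed

lemma dev_cont_within: "developing_map D \<Longrightarrow> continuous_on S D"
  using dev_cont continuous_on_subset by blast

lemma dev_open_map:
  assumes dev: "developing_map D" and O: "open Op"
  shows "openin (top_of_set ein_univ) (D ` Op)"
proof -
  have "\<forall>p\<in>Op. \<exists>T. openin (top_of_set ein_univ) T \<and> D p \<in> T \<and> T \<subseteq> D ` Op"
  proof
    fix p assume p: "p \<in> Op"
    obtain U g where U: "open U" "p \<in> U" "openin (top_of_set ein_univ) (D ` U)"
        "homeomorphism U (D ` U) D g"
      using dev_chart[OF dev] by blast
    have "openin (top_of_set U) (Op \<inter> U)" using O
      by (metis Int_commute openin_open_Int)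
    then have "openin (top_of_set (D ` U)) (D ` (Op \<inter> U))"
      using homeomorphism_imp_open_map U(4) by blast
    then have "openin (top_of_set ein_univ) (D ` (Op \<inter> U))"
      using openin_trans U(3) by blast
    then show "\<exists>T. openin (top_of_set ein_univ) T \<and> D p \<in> T \<and> T \<subseteq> D ` Op"
      using p U(2) by blast
  qed
  note * = this
  show ?thesis
  proof (subst openin_subopen, intro ballI)
    fix x assume "x \<in> D ` Op"
    then obtain p where p: "p \<in> Op" "x = D p" by blast
    show "\<exists>T. openin (top_of_set ein_univ) T \<and> x \<in> T \<and> T \<subseteq> D ` Op"
      using *[rule_format, OF p(1)] p(2) by blast
  qed
qed

lemma dev_fiber_const:
  fixes a b :: real
  assumes dev: "developing_map D" and ab: "a \<le> b" and c: "continuous_on {a..b} \<gamma>"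
    and const: "\<forall>s\<in>{a..b}. D (\<gamma> s) = D (\<gamma> a)"
  shows "\<forall>s\<in>{a..b}. \<gamma> s = \<gamma> a"
proof -
  have "openin (top_of_set {a..b}) {s \<in> {a..b}. \<gamma> s = \<gamma> a}"
  proof -
    obtain U g where U: "open U" "\<gamma> a \<in> U" "homeomorphism U (D ` U) D g"
      using dev_chart[OF dev] by blast
    have eq: "{s \<in> {a..b}. \<gamma> s = \<gamma> a} = {s \<in> {a..b}. \<gamma> s \<in> U}"
    proof safe
      fix s assume s: "s \<in> {a..b}" "\<gamma> s \<in> U"
      have "g (D (\<gamma> s)) = \<gamma> s" using homeomorphism_apply1[OF U(3) s(2)] .
      moreover have "g (D (\<gamma> a)) = \<gamma> a" using homeomorphism_apply1[OF U(3) U(2)] .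
      ultimately show "\<gamma> s = \<gamma> a" using const s by metis
    qed (use U in auto)
    have eq2: "{s \<in> {a..b}. \<gamma> s \<in> U} = {a..b} \<inter> \<gamma> -` U" by auto
    show ?thesis unfolding eq eq2 using continuous_openin_preimage_gen[OF c U(1)] .
  qed
  note o1 = this
  have o2: "\<exists>x\<in>{a..b}. \<gamma> x = \<gamma> a" using ab by (intro bexI[of _ a]) auto
  show ?thesis by (rule continuous_levelset_openin[OF connected_Icc c o1 o2])
qed

lemma cc_const:
  assumes dev: "developing_map D"
  shows "causal_curve D (\<lambda>s. p)"
  unfolding causal_curve_def ein_future_causal_def
  using dev_in[OF dev] dev_norm[OF dev] by (auto simp: sd_self o_def)

lemma cc_efc: "causal_curve D \<gamma> \<Longrightarrow> ein_future_causal (D \<circ> \<gamma>)"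
  unfolding causal_curve_def by blast

lemma cc_cont: "causal_curve D \<gamma> \<Longrightarrow> continuous_on {0..1} \<gamma>"
  unfolding causal_curve_def by blast

lemma cc_le:
  assumes "causal_curve D \<gamma>" "0 \<le> s1" "s1 \<le> s2" "s2 \<le> 1"
  shows "le_E (D (\<gamma> s1)) (D (\<gamma> s2))"
  using efc_le[OF cc_efc[OF assms(1)] assms(2-4)] by simp

lemma cc_time_mono:
  assumes "causal_curve D \<gamma>" "0 \<le> s1" "s1 \<le> s2" "s2 \<le> 1"
  shows "snd (D (\<gamma> s1)) \<le> snd (D (\<gamma> s2))"
  using efc_time_mono[OF cc_efc[OF assms(1)] assms(2-4)] by simp

lemma cc_sub:
  assumes g: "causal_curve D \<gamma>" and ab: "0 \<le> a" "a \<le> b" "b \<le> 1"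
  shows "causal_curve D (\<lambda>s. \<gamma> (a + s * (b - a)))"
proof -
  let ?f = "\<lambda>s::real. a + s * (b - a)"
  have fin: "?f s \<in> {0..1}" if "s \<in> {0..1}" for s
  proof -
    have "0 \<le> s * (b - a)" "s * (b - a) \<le> (b - a)" using that ab by (auto intro: mult_left_le_one_le)
    then show ?thesis using ab by auto
  qed
  have fmono: "?f s1 \<le> ?f s2" if "s1 \<le> s2" for s1 s2
    using that ab by (simp add: mult_right_mono)
  have cf: "continuous_on {0..1} ?f" by (intro continuous_intros)
  have im: "?f ` {0..1} \<subseteq> {0..1}" using fin by blast
  have c1: "continuous_on {0..1} (\<lambda>s. \<gamma> (?f s))"
    using continuous_on_compose2[OF cc_cont[OF g] cf im] by blast
  have c2: "continuous_on {0..1} (D \<circ> (\<lambda>s. \<gamma> (?f s)))"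
    using continuous_on_compose2[OF cc_efc[OF g, unfolded ein_future_causal_def, THEN conjunct1] cf im]
    by (simp add: o_def)
  show ?thesis
    unfolding causal_curve_def ein_future_causal_def
  proof (intro conjI c1 c2 ballI allI impI)
    fix s :: real assume "s \<in> {0..1}"
    then show "(D \<circ> (\<lambda>s. \<gamma> (?f s))) s \<in> ein_univ"
    proof -
      have "?f s \<in> {0..1}" using fin \<open>s \<in> {0..1}\<close> by blast
      then have "(D \<circ> \<gamma>) (?f s) \<in> ein_univ" using efc_in[OF cc_efc[OF g]] by simp
      then show ?thesis by (simp only: o_def)
    qed
  next
    fix s1 s2 :: real assume "0 \<le> s1 \<and> s1 \<le> s2 \<and> s2 \<le> 1"
    then have h: "0 \<le> ?f s1" "?f s1 \<le> ?f s2" "?f s2 \<le> 1" using fin[of s1] fin[of s2] fmono[of s1 s2] by auto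
    then show "sd (fst ((D \<circ> (\<lambda>s. \<gamma> (?f s))) s1)) (fst ((D \<circ> (\<lambda>s. \<gamma> (?f s))) s2))
        \<le> snd ((D \<circ> (\<lambda>s. \<gamma> (?f s))) s2) - snd ((D \<circ> (\<lambda>s. \<gamma> (?f s))) s1)"
      using cc_le[OF g h] unfolding le_E_def by (simp only: o_def)
  qed
qed

lemma cc_join:
  assumes dev: "developing_map D" and g1: "causal_curve D \<gamma>1" and g2: "causal_curve D \<gamma>2" and e: "\<gamma>1 1 = \<gamma>2 0"
  shows "causal_curve D (\<gamma>1 +++ \<gamma>2)"
proof -
  have p1: "path \<gamma>1" "path \<gamma>2" using cc_cont[OF g1] cc_cont[OF g2] unfolding path_def by auto
  have pj: "path (\<gamma>1 +++ \<gamma>2)" using path_join_imp[OF p1] e unfolding pathfinish_def pathstart_def by simp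
  have De: "D \<circ> (\<gamma>1 +++ \<gamma>2) = (D \<circ> \<gamma>1) +++ (D \<circ> \<gamma>2)"
    by (auto simp: joinpaths_def o_def)
  have q1: "path (D \<circ> \<gamma>1)" "path (D \<circ> \<gamma>2)"
    using cc_efc[OF g1] cc_efc[OF g2] unfolding ein_future_causal_def path_def by blast+
  have qj: "path ((D \<circ> \<gamma>1) +++ (D \<circ> \<gamma>2))"
    using path_join_imp[OF q1] e unfolding pathfinish_def pathstart_def by simp
  have ineq: "le_E (D ((\<gamma>1 +++ \<gamma>2) s1)) (D ((\<gamma>1 +++ \<gamma>2) s2))"
    if s: "0 \<le> s1" "s1 \<le> s2" "s2 \<le> 1" for s1 s2
  proof (cases "s2 \<le> 1/2")
    case True
    have j: "(\<gamma>1 +++ \<gamma>2) s1 = \<gamma>1 (2 * s1)" "(\<gamma>1 +++ \<gamma>2) s2 = \<gamma>1 (2 * s2)"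
      using True s unfolding joinpaths_def by auto
    have "le_E (D (\<gamma>1 (2 * s1))) (D (\<gamma>1 (2 * s2)))"
      by (rule cc_le[OF g1]) (use s True in auto)
    then show ?thesis unfolding j .
  next
    case False
    note F = False
    show ?thesis
    proof (cases "s1 \<le> 1/2")
      case True
      have j: "(\<gamma>1 +++ \<gamma>2) s1 = \<gamma>1 (2 * s1)" "(\<gamma>1 +++ \<gamma>2) s2 = \<gamma>2 (2 * s2 - 1)"
        using True F s unfolding joinpaths_def by auto
      have a: "le_E (D (\<gamma>1 (2 * s1))) (D (\<gamma>1 1))"
        by (rule cc_le[OF g1]) (use s True in auto)
      have b: "le_E (D (\<gamma>2 0)) (D (\<gamma>2 (2 * s2 - 1)))"
        by (rule cc_le[OF g2]) (use s F in auto)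
      have "le_E (D (\<gamma>1 (2 * s1))) (D (\<gamma>2 (2 * s2 - 1)))"
        using le_E_trans[OF dev_in[OF dev] dev_in[OF dev] dev_in[OF dev] a] b e by metis
      then show ?thesis unfolding j .
    next
      case False
      have j: "(\<gamma>1 +++ \<gamma>2) s1 = \<gamma>2 (2 * s1 - 1)" "(\<gamma>1 +++ \<gamma>2) s2 = \<gamma>2 (2 * s2 - 1)"
        using False F s unfolding joinpaths_def by auto
      have "le_E (D (\<gamma>2 (2 * s1 - 1))) (D (\<gamma>2 (2 * s2 - 1)))"
        by (rule cc_le[OF g2]) (use s False in auto)
      then show ?thesis unfolding j .
    qed
  qed
  have c3: "continuous_on {0..1} (D \<circ> (\<gamma>1 +++ \<gamma>2))" using qj unfolding De path_def .
  show ?thesis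
    unfolding causal_curve_def ein_future_causal_def
    apply (intro conjI)
    subgoal using pj unfolding path_def .
    subgoal by (rule c3)
    subgoal using dev_in[OF dev] by simp
    subgoal using ineq unfolding le_E_def o_def by blast
    done
qed

lemma future_trans:
  assumes dev: "developing_map D" and "q \<in> causal_future D p" and "r \<in> causal_future D q"
  shows "r \<in> causal_future D p"
proof -
  obtain g1 where g1: "causal_curve D g1" "g1 0 = p" "g1 1 = q"
    using assms(2) unfolding causal_future_def by blast
  obtain g2 where g2: "causal_curve D g2" "g2 0 = q" "g2 1 = r"
    using assms(3) unfolding causal_future_def by blast
  have "causal_curve D (g1 +++ g2)" using cc_join[OF dev g1(1) g2(1)] g1 g2 by simp
  moreover have "(g1 +++ g2) 0 = p" "(g1 +++ g2) 1 = r" using g1 g2 by (auto simp: joinpaths_def)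
  ultimately show ?thesis unfolding causal_future_def by blast
qed

lemma past_iff: "q \<in> causal_past D p \<longleftrightarrow> p \<in> causal_future D q"
  unfolding causal_past_def causal_future_def by blast

lemma future_refl: "developing_map D \<Longrightarrow> p \<in> causal_future D p"
  unfolding causal_future_def using cc_const by blast

lemma future_sub:
  assumes "causal_curve D \<gamma>" "0 \<le> a" "a \<le> b" "b \<le> 1"
  shows "\<gamma> b \<in> causal_future D (\<gamma> a)"
  unfolding causal_future_def using cc_sub[OF assms] by (intro CollectI exI[of _ "\<lambda>s. \<gamma> (a + s * (b - a))"]) auto

end


context
  fixes D :: "'m::t2_space \<Rightarrow> (real^'n) \<times> real"
begin

definition good_nbhd :: "'m set \<Rightarrow> bool" where
  "good_nbhd W \<longleftrightarrow> open W \<and> inj_on D W \<and>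
     (\<forall>u\<in>W. \<forall>v\<in>W. le_E (D u) (D v) \<longrightarrow> v \<in> causal_future D u)"

lemma cont_sd_D1:
  assumes dev: "developing_map D" and a: "norm a = 1"
  shows "continuous_on UNIV (\<lambda>u. sd a (fst (D u)))"
  unfolding sph_dist_def
proof (rule continuous_on_arccos)
  show "continuous_on UNIV (\<lambda>u. a \<bullet> fst (D u))"
    using dev_cont[OF dev] by (intro continuous_intros) auto
  show "\<forall>x\<in>UNIV. - 1 \<le> a \<bullet> fst (D x) \<and> a \<bullet> fst (D x) \<le> 1"
    using inner_unit_bounds[OF a dev_norm[OF dev]] by blast
qed

lemma cont_sd_D2:
  assumes dev: "developing_map D" and a: "norm a = 1"
  shows "continuous_on UNIV (\<lambda>u. sd (fst (D u)) a)"
  using cont_sd_D1[OF dev a] by (simp add: sd_sym)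

lemma cont_time_D:
  assumes dev: "developing_map D"
  shows "continuous_on UNIV (\<lambda>u. snd (D u))"
  using dev_cont[OF dev] by (intro continuous_intros) auto

lemma good_nbhd_exists:
  assumes dev: "developing_map D"
  shows "\<exists>W. m \<in> W \<and> good_nbhd W"
proof -
  obtain U g where U: "open U" "m \<in> U" "openin (top_of_set ein_univ) (D ` U)"
      "homeomorphism U (D ` U) D g"
    using dev_chart[OF dev] by blast
  obtain Op where Op: "open Op" "D ` U = ein_univ \<inter> Op"
    using U(3) unfolding openin_open by blast
  have "D m \<in> Op" using Op U(2) by blast
  then obtain \<epsilon> where \<epsilon>: "\<epsilon> > 0" "ball (D m) \<epsilon> \<subseteq> Op"
    using Op(1) open_contains_ball by blast
  define e where "e = min (\<epsilon>/3) 1"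
  have e: "0 < e" "e \<le> 1" "3 * e \<le> \<epsilon>" using \<epsilon> e_def by auto
  define mx where "mx = fst (D m)"
  define mt where "mt = snd (D m)"
  have nmx: "norm mx = 1" using dev_norm[OF dev] mx_def by simp
  define P where "P w \<longleftrightarrow> norm (fst w) = 1 \<and> sd mx (fst w) < snd w - (mt - e) \<and> sd (fst w) mx < (mt + e) - snd w"
    for w :: "(real^'n) \<times> real"
  have PU: "w \<in> D ` U" if "P w" for w
  proof -
    have nw: "norm (fst w) = 1" using that P_def by simp
    have s1: "0 \<le> sd mx (fst w)" "0 \<le> sd (fst w) mx" using sd_nonneg nw nmx by auto
    have t: "\<bar>snd w - mt\<bar> < e" using that s1 unfolding P_def by auto
    have x: "norm (fst w - mx) < 2 * e"
      using norm_le_sd[OF nw nmx] that s1 t unfolding P_def by auto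
    have "w - D m = (fst w - mx, snd w - mt)" unfolding mx_def mt_def by (simp add: prod_eq_iff)
    then have "norm (w - D m) \<le> norm (fst w - mx) + norm (snd w - mt)"
      using norm_Pair_le by metis
    then have "dist w (D m) < \<epsilon>" using x t e by (simp add: dist_norm)
    then have "w \<in> Op" using \<epsilon>(2) by (auto simp: dist_commute)
    moreover have "w \<in> ein_univ" using nw ein_univ_iff by blast
    ultimately show ?thesis using Op(2) by blast
  qed
  define W where "W = U \<inter> {u. sd mx (fst (D u)) < snd (D u) - (mt - e)} \<inter> {u. sd (fst (D u)) mx < (mt + e) - snd (D u)}"
  have o1: "open {u. sd mx (fst (D u)) < snd (D u) - (mt - e)}"
    by (rule open_Collect_less[OF cont_sd_D1[OF dev nmx]])
      (intro continuous_on_diff cont_time_D[OF dev] continuous_on_const)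
  have o2: "open {u. sd (fst (D u)) mx < (mt + e) - snd (D u)}"
    by (rule open_Collect_less[OF cont_sd_D2[OF dev nmx]])
      (intro continuous_on_diff cont_time_D[OF dev] continuous_on_const)
  have oW: "open W" unfolding W_def using o1 o2 U(1) by (intro open_Int)
  have mW: "m \<in> W" unfolding W_def using U(2) e sd_self[OF nmx] mx_def mt_def by auto
  have PW: "P (D u)" if "u \<in> W" for u using that dev_norm[OF dev] unfolding W_def P_def by auto
  have injW: "inj_on D W"
  proof (rule inj_onI)
    fix a b assume ab: "a \<in> W" "b \<in> W" "D a = D b"
    have "a = g (D a)" using homeomorphism_apply1[OF U(4)] ab(1) unfolding W_def by simp
    also have "\<dots> = g (D b)" using ab(3) by simp
    also have "\<dots> = b" using homeomorphism_apply1[OF U(4)] ab(2) unfolding W_def by simp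
    finally show "a = b" .
  qed
  have main: "v \<in> causal_future D u" if uv: "u \<in> W" "v \<in> W" "le_E (D u) (D v)" for u v
  proof -
    define x where "x = fst (D u)"
    define s where "s = snd (D u)"
    define y where "y = fst (D v)"
    define t where "t = snd (D v)"
    have nx: "norm x = 1" and ny: "norm y = 1" using dev_norm[OF dev] x_def y_def by auto
    have xy: "sd x y \<le> t - s" using uv(3) unfolding le_E_def x_def y_def s_def t_def by simp
    have Pu: "sd mx x < s - (mt - e)" "sd x mx < (mt + e) - s" using PW[OF uv(1)] unfolding P_def x_def s_def by auto
    have Pv: "sd mx y < t - (mt - e)" "sd y mx < (mt + e) - t" using PW[OF uv(2)] unfolding P_def y_def t_def by auto
    have "0 \<le> sd mx x" "0 \<le> sd y mx" using sd_nonneg nmx nx ny by auto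
    then have "t - s < 2" using Pu Pv e by linarith
    then have xypi: "sd x y < pi" using xy pi_gt3 by linarith
    obtain k where k: "continuous_on UNIV k" "k 0 = x" "k 1 = y" "\<And>s. norm (k s) = 1"
      "\<And>s1 s2. 0 \<le> s1 \<Longrightarrow> s1 \<le> s2 \<Longrightarrow> s2 \<le> 1 \<Longrightarrow> sd (k s1) (k s2) = (s2 - s1) * sd x y"
      using slerp_exists[OF nx ny xypi] by blast
    define \<kappa> where "\<kappa> = (\<lambda>\<theta>. (k \<theta>, s + \<theta> * (t - s)))"
    have Pk: "P (\<kappa> \<theta>)" if th: "0 \<le> \<theta>" "\<theta> \<le> 1" for \<theta>
    proof -
      have a1: "sd mx (k \<theta>) \<le> sd mx x + sd x (k \<theta>)" using sd_triangle[OF nmx nx k(4)] .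
      have a2: "sd x (k \<theta>) = \<theta> * sd x y" using k(5)[of 0 \<theta>] th k(2) by simp
      have a3: "sd (k \<theta>) mx \<le> sd (k \<theta>) y + sd y mx" using sd_triangle[OF k(4) ny nmx] .
      have a4: "sd (k \<theta>) y = (1 - \<theta>) * sd x y" using k(5)[of \<theta> 1] th k(3) by simp
      have b1: "\<theta> * sd x y \<le> \<theta> * (t - s)" using xy th by (simp add: mult_left_mono)
      have b2: "(1 - \<theta>) * sd x y \<le> (1 - \<theta>) * (t - s)" using xy th by (simp add: mult_left_mono)
      have c1: "sd mx (k \<theta>) < (s + \<theta> * (t - s)) - (mt - e)" using a1 a2 b1 Pu(1) by linarith
      have eq: "(1 - \<theta>) * (t - s) = (t - s) - \<theta> * (t - s)" by (simp add: algebra_simps)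
      have c2: "sd (k \<theta>) mx < (mt + e) - (s + \<theta> * (t - s))" using a3 a4 b2 Pv(2) eq by linarith
      show ?thesis unfolding P_def \<kappa>_def using k(4) c1 c2 by simp
    qed
    have kU: "\<kappa> \<theta> \<in> D ` U" if "\<theta> \<in> {0..1}" for \<theta> using PU Pk that by auto
    have ck: "continuous_on {0..1} \<kappa>" unfolding \<kappa>_def
      using continuous_on_subset[OF k(1)] by (intro continuous_intros) auto
    define lf where "lf = g \<circ> \<kappa>"
    have kim: "\<kappa> ` {0..1} \<subseteq> D ` U" using kU by blast
    have cl: "continuous_on {0..1} lf" unfolding lf_def
      using continuous_on_compose2[OF homeomorphism_cont2[OF U(4)] ck kim] by (simp add: o_def)
    have Dl: "D (lf \<theta>) = \<kappa> \<theta>" if "\<theta> \<in> {0..1}" for \<theta>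
      unfolding lf_def using homeomorphism_apply2[OF U(4) kU[OF that]] by simp
    have "continuous_on {0..1} (D \<circ> lf) = continuous_on {0..1} \<kappa>"
      by (rule continuous_on_cong) (simp_all add: Dl)
    then have cDl: "continuous_on {0..1} (D \<circ> lf)" using ck by simp
    have cc: "causal_curve D lf"
      unfolding causal_curve_def ein_future_causal_def
    proof (intro conjI cl cDl ballI allI impI)
      fix \<theta> :: real assume "\<theta> \<in> {0..1}"
      then show "(D \<circ> lf) \<theta> \<in> ein_univ" using Dl k(4)[of \<theta>] unfolding ein_univ_iff \<kappa>_def by simp
    next
      fix s1 s2 :: real assume h: "0 \<le> s1 \<and> s1 \<le> s2 \<and> s2 \<le> 1"
      have m: "(s2 - s1) * sd x y \<le> (s2 - s1) * (t - s)" using h xy by (simp add: mult_left_mono)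
      have d1: "D (lf s1) = \<kappa> s1" "D (lf s2) = \<kappa> s2" using h Dl by auto
      have k5: "sd (k s1) (k s2) = (s2 - s1) * sd x y" using h k(5) by blast
      have eq: "(s2 - s1) * (t - s) = (s + s2 * (t - s)) - (s + s1 * (t - s))" by (simp add: algebra_simps)
      show "sd (fst ((D \<circ> lf) s1)) (fst ((D \<circ> lf) s2)) \<le> snd ((D \<circ> lf) s2) - snd ((D \<circ> lf) s1)"
        unfolding o_def d1 unfolding \<kappa>_def fst_conv snd_conv using m k5 eq by linarith
    qed
    have "lf 0 = g (D u)" unfolding lf_def \<kappa>_def using k(2) x_def s_def by simp
    then have l0: "lf 0 = u" using homeomorphism_apply1[OF U(4)] uv(1) W_def by simp
    have "lf 1 = g (D v)" unfolding lf_def \<kappa>_def using k(3) y_def t_def by simp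
    then have l1: "lf 1 = v" using homeomorphism_apply1[OF U(4)] uv(2) W_def by simp
    show ?thesis unfolding causal_future_def using cc l0 l1 by blast
  qed
  show ?thesis unfolding good_nbhd_def using mW oW injW main by blast
qed

end


lemma cont_nbhd:
  fixes \<gamma> :: "real \<Rightarrow> 'a::topological_space"
  assumes c: "continuous_on {0..1} \<gamma>" and s0: "s0 \<in> {0..1}" and N: "open N" and g: "\<gamma> s0 \<in> N"
  shows "\<exists>\<epsilon>>0. \<forall>s\<in>{0..1}. \<bar>s - s0\<bar> < \<epsilon> \<longrightarrow> \<gamma> s \<in> N"
proof -
  obtain A where A: "open A" "s0 \<in> A" "\<forall>y\<in>{0..1}. y \<in> A \<longrightarrow> \<gamma> y \<in> N"
    using c s0 N g unfolding continuous_on_topological by metis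
  obtain \<epsilon> where e: "\<epsilon> > 0" "ball s0 \<epsilon> \<subseteq> A" using A(1,2) open_contains_ball by blast
  have "\<forall>s\<in>{0..1}. \<bar>s - s0\<bar> < \<epsilon> \<longrightarrow> \<gamma> s \<in> N"
  proof (intro ballI impI)
    fix s assume "s \<in> {0..1}" "\<bar>s - s0\<bar> < \<epsilon>"
    then have "s \<in> A" using e(2) by (auto simp: dist_real_def abs_minus_commute)
    then show "\<gamma> s \<in> N" using A(3) \<open>s \<in> {0..1}\<close> by blast
  qed
  then show ?thesis using e(1) by blast
qed

context
  fixes D :: "'m::t2_space \<Rightarrow> (real^'n) \<times> real"
begin

lemma cc_time_cont:
  assumes "causal_curve D \<gamma>"
  shows "continuous_on {0..1} (\<lambda>s. snd (D (\<gamma> s)))"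
proof -
  have "continuous_on {0..1} (D \<circ> \<gamma>)" using cc_efc[OF assms] unfolding ein_future_causal_def by blast
  from continuous_on_snd[OF this] show ?thesis by (simp add: o_def)
qed

lemma cc_D_cont:
  assumes "causal_curve D \<gamma>"
  shows "continuous_on {0..1} (\<lambda>s. D (\<gamma> s))"
  using cc_efc[OF assms] unfolding ein_future_causal_def by (simp add: o_def)

lemma good_lt:
  assumes dev: "developing_map D" and W: "good_nbhd D W" and uv: "u \<in> W" "v \<in> W"
    and lt: "lt_E (D u) (D v)"
  shows "v \<in> interior (causal_future D u)"
proof -
  have nu: "norm (fst (D u)) = 1" using dev_norm[OF dev] .
  define N where "N = W \<inter> {w. sd (fst (D u)) (fst (D w)) < snd (D w) - snd (D u)}"
  have o1: "open {w. sd (fst (D u)) (fst (D w)) < snd (D w) - snd (D u)}"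
    by (rule open_Collect_less[OF cont_sd_D1[OF dev nu]])
      (intro continuous_on_diff cont_time_D[OF dev] continuous_on_const)
  have oN: "open N" unfolding N_def using o1 W unfolding good_nbhd_def by (intro open_Int) auto
  have vN: "v \<in> N" unfolding N_def using uv lt unfolding lt_E_def by simp
  have sub: "N \<subseteq> causal_future D u"
  proof
    fix w assume "w \<in> N"
    then have "w \<in> W" "le_E (D u) (D w)" unfolding N_def le_E_def by auto
    then show "w \<in> causal_future D u" using W uv(1) unfolding good_nbhd_def by blast
  qed
  show ?thesis using interiorI[OF oN vN sub] .
qed

lemma time_level_const:
  assumes dev: "developing_map D" and g: "causal_curve D \<gamma>"
    and ab: "0 \<le> a" "a \<le> b" "b \<le> 1" and t: "snd (D (\<gamma> a)) = snd (D (\<gamma> b))"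
  shows "\<forall>s\<in>{a..b}. \<gamma> s = \<gamma> a"
proof -
  have "D (\<gamma> s) = D (\<gamma> a)" if s: "s \<in> {a..b}" for s
  proof -
    have s1: "a \<le> s" "s \<le> b" using s by auto
    have le: "le_E (D (\<gamma> a)) (D (\<gamma> s))" using cc_le[OF g ab(1) s1(1)] s1(2) ab(3) by simp
    have t1: "snd (D (\<gamma> s)) \<le> snd (D (\<gamma> b))" using cc_time_mono[OF g _ s1(2) ab(3)] ab(1) s1(1) by simp
    have t2: "snd (D (\<gamma> a)) \<le> snd (D (\<gamma> s))" using cc_time_mono[OF g ab(1) s1(1)] s1(2) ab(3) by simp
    have z1: "sd (fst (D (\<gamma> a))) (fst (D (\<gamma> s))) \<le> 0" using le t t1 t2 unfolding le_E_def by linarith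
    have z2: "0 \<le> sd (fst (D (\<gamma> a))) (fst (D (\<gamma> s)))" by (rule sd_nonneg[OF dev_norm[OF dev] dev_norm[OF dev]])
    have "sd (fst (D (\<gamma> a))) (fst (D (\<gamma> s))) = 0" using z1 z2 by simp
    then have "fst (D (\<gamma> a)) = fst (D (\<gamma> s))" by (rule sd_eq_0[OF dev_norm[OF dev] dev_norm[OF dev]])
    moreover have "snd (D (\<gamma> a)) = snd (D (\<gamma> s))" using t t1 t2 by linarith
    ultimately show ?thesis by (simp add: prod_eq_iff)
  qed
  moreover have "continuous_on {a..b} \<gamma>" using continuous_on_subset[OF cc_cont[OF g], of "{a..b}"] ab by auto
  ultimately show ?thesis using dev_fiber_const[OF dev ab(2)] by blast
qed

lemma reach_time:
  assumes dev: "developing_map D" and g: "causal_curve D \<gamma>"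
    and lt: "snd (D (\<gamma> 0)) < snd (D (\<gamma> 1))"
  shows "\<exists>\<sigma>. 0 < \<sigma> \<and> \<sigma> \<le> 1 \<and> \<gamma> \<sigma> = \<gamma> 1 \<and> (\<forall>s. 0 \<le> s \<and> s < \<sigma> \<longrightarrow> snd (D (\<gamma> s)) < snd (D (\<gamma> 1)))"
proof -
  define Z where "Z = {s \<in> {0..1}. snd (D (\<gamma> s)) = snd (D (\<gamma> 1))}"
  have cZ: "closed Z" unfolding Z_def
    by (rule continuous_closed_preimage_constant[OF cc_time_cont[OF g]]) simp
  have "compact ({0..1} \<inter> Z)" by (rule compact_Int_closed[OF compact_Icc cZ])
  moreover have "{0..1} \<inter> Z = Z" unfolding Z_def by blast
  ultimately have cpZ: "compact Z" by simp
  have "1 \<in> Z" unfolding Z_def by simp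
  then have "Z \<noteq> {}" by blast
  then obtain \<sigma> where s: "\<sigma> \<in> Z" "\<forall>t\<in>Z. \<sigma> \<le> t" using compact_attains_inf[OF cpZ] by blast
  have s01: "0 \<le> \<sigma>" "\<sigma> \<le> 1" using s(1) unfolding Z_def by auto
  have "\<sigma> \<noteq> 0" using s(1) lt unfolding Z_def by auto
  then have s0: "0 < \<sigma>" using s01 by simp
  have "snd (D (\<gamma> \<sigma>)) = snd (D (\<gamma> 1))" using s(1) unfolding Z_def by blast
  then have "\<forall>x\<in>{\<sigma>..1}. \<gamma> x = \<gamma> \<sigma>"
    by (rule time_level_const[OF dev g s01(1) s01(2) order_refl])
  moreover have "1 \<in> {\<sigma>..1}" using s01 by simp
  ultimately have "\<gamma> 1 = \<gamma> \<sigma>" by blast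
  then have g1: "\<gamma> \<sigma> = \<gamma> 1" by (rule sym)
  have "snd (D (\<gamma> s)) < snd (D (\<gamma> 1))" if "0 \<le> s" "s < \<sigma>" for s
  proof -
    have "s \<le> 1" using that s01 by simp
    then have "snd (D (\<gamma> s)) \<le> snd (D (\<gamma> 1))" using cc_time_mono[OF g that(1)] by simp
    moreover have "s \<notin> Z"
    proof
      assume "s \<in> Z"
      then have "\<sigma> \<le> s" using s(2) by blast
      then show False using that by simp
    qed
    then have "snd (D (\<gamma> s)) \<noteq> snd (D (\<gamma> 1))" using that s01 unfolding Z_def by simp
    ultimately show ?thesis by simp
  qed
  then show ?thesis using s0 s01 g1 by blast
qed

lemma push_up:
  assumes dev: "developing_map D" and g: "causal_curve D \<gamma>"
    and g0: "\<gamma> 0 \<in> interior (causal_future D q)"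
  shows "\<gamma> 1 \<in> interior (causal_future D q)"
proof -
  let ?I = "interior (causal_future D q)"
  define P where "P a b \<longleftrightarrow> (0 \<le> a \<longrightarrow> b \<le> 1 \<longrightarrow> \<gamma> a \<in> ?I \<longrightarrow> \<gamma> b \<in> ?I)" for a b :: real
  have "P 0 1"
  proof (rule Bolzano[where P = P])
    show "(0::real) \<le> 1" by simp
  next
    fix a b c :: real assume "P a b" "P b c" "a \<le> b" "b \<le> c"
    then show "P a c" unfolding P_def by auto
  next
    fix x :: real assume x: "0 \<le> x" "x \<le> 1"
    obtain W where W: "\<gamma> x \<in> W" "good_nbhd D W" using good_nbhd_exists[OF dev] by blast
    have oW: "open W" using W(2) unfolding good_nbhd_def by blast
    obtain \<epsilon> where e: "\<epsilon> > 0" "\<forall>s\<in>{0..1}. \<bar>s - x\<bar> < \<epsilon> \<longrightarrow> \<gamma> s \<in> W"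
      using cont_nbhd[OF cc_cont[OF g] _ oW W(1)] x by auto
    have "\<forall>a b. a \<le> x \<and> x \<le> b \<and> b - a < \<epsilon> \<longrightarrow> P a b"
    proof (intro allI impI)
      fix a b :: real assume ab: "a \<le> x \<and> x \<le> b \<and> b - a < \<epsilon>"
      show "P a b" unfolding P_def
      proof (intro impI)
        assume a0: "0 \<le> a" and b1: "b \<le> 1" and ga: "\<gamma> a \<in> ?I"
        have aW: "\<gamma> a \<in> W" using e(2) ab a0 b1 x by auto
        have bW: "\<gamma> b \<in> W" using e(2) ab a0 b1 x by auto
        have oIW: "open (?I \<inter> W)" using oW by blast
        have "openin (top_of_set ein_univ) (D ` (?I \<inter> W))" using dev_open_map[OF dev oIW] .
        moreover have "D (\<gamma> a) \<in> D ` (?I \<inter> W)" using ga aW by blast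
        ultimately obtain \<eta> where eta: "\<eta> > 0" "ball (D (\<gamma> a)) \<eta> \<inter> ein_univ \<subseteq> D ` (?I \<inter> W)"
          unfolding openin_contains_ball by blast
        define w where "w = (fst (D (\<gamma> a)), snd (D (\<gamma> a)) - \<eta> / 2)"
        have "dist (D (\<gamma> a)) w = \<eta> / 2" unfolding w_def
          by (cases "D (\<gamma> a)") (use eta in \<open>simp add: dist_Pair_Pair dist_real_def\<close>)
        then have "w \<in> ball (D (\<gamma> a)) \<eta>" using eta by simp
        moreover have "w \<in> ein_univ" unfolding w_def ein_univ_iff using dev_norm[OF dev] by simp
        ultimately obtain u where u: "u \<in> ?I \<inter> W" "D u = w" using eta(2) by blast
        have le: "le_E (D (\<gamma> a)) (D (\<gamma> b))" using cc_le[OF g] a0 b1 ab by auto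
        have "lt_E (D u) (D (\<gamma> b))" using le eta(1) u(2) unfolding w_def le_E_def lt_E_def by simp
        then have gb: "\<gamma> b \<in> interior (causal_future D u)" using good_lt[OF dev W(2) _ bW] u(1) by blast
        have "u \<in> causal_future D q" using u(1) interior_subset by blast
        then have "causal_future D u \<subseteq> causal_future D q" using future_trans[OF dev] by blast
        then show "\<gamma> b \<in> ?I" using gb interior_mono by blast
      qed
    qed
    then show "\<exists>d>0. \<forall>a b. a \<le> x \<and> x \<le> b \<and> b - a < d \<longrightarrow> P a b" using e(1) by blast
  qed
  then show ?thesis using g0 unfolding P_def by simp
qed

end


lemma level_compact:
  fixes f :: "real \<Rightarrow> real"
  assumes "continuous_on {0..1} f"
  shows "compact {s \<in> {0..1}. f s = c}"
proof -
  have cZ: "closed {s \<in> {0..1}. f s = c}"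
    by (rule continuous_closed_preimage_constant[OF assms]) simp
  have "compact ({0..1} \<inter> {s \<in> {0..1}. f s = c})" by (rule compact_Int_closed[OF compact_Icc cZ])
  moreover have "{0..1} \<inter> {s \<in> {0..1}. f s = c} = {s \<in> {0..1}. f s = c}" by blast
  ultimately show ?thesis by simp
qed

context
  fixes D :: "'m::t2_space \<Rightarrow> (real^'n) \<times> real"
begin

lemma open_time_gt:
  assumes dev: "developing_map D"
  shows "open {u. c < snd (D u)}" "open {u. snd (D u) < c}"
  by (rule open_Collect_less[OF continuous_on_const cont_time_D[OF dev]])
     (rule open_Collect_less[OF cont_time_D[OF dev] continuous_on_const])

lemma claimB:
  assumes dev: "developing_map D" and nc: "\<forall>p q. \<not> conjugate_pts D p q"
    and g: "causal_curve D \<gamma>" and lt: "lt_E (D (\<gamma> 0)) (D (\<gamma> 1))"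
  shows "\<gamma> 1 \<in> interior (causal_future D (\<gamma> 0))"
proof -
  define q where "q = \<gamma> 0"
  define zx where "zx = fst (D q)"
  define tz where "tz = snd (D q)"
  define t where "t s = snd (D (\<gamma> s))" for s
  define X where "X s = fst (D (\<gamma> s))" for s
  define h where "h s = t s - tz - sd zx (X s)" for s
  have nzx: "norm zx = 1" unfolding zx_def using dev_norm[OF dev] .
  have nX: "norm (X s) = 1" for s unfolding X_def using dev_norm[OF dev] .
  have t0: "t 0 = tz" unfolding t_def tz_def q_def ..
  have X0: "X 0 = zx" unfolding X_def zx_def q_def ..
  have ct: "continuous_on {0..1} t" unfolding t_def using cc_time_cont[OF g] .
  have cX: "continuous_on {0..1} (\<lambda>s. sd zx (X s))" unfolding X_def
    using continuous_on_compose2[OF cont_sd_D1[OF dev nzx] cc_cont[OF g]] by simp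
  have ch: "continuous_on {0..1} h" unfolding h_def using ct cX by (intro continuous_intros)
  have leE: "sd (X a) (X b) \<le> t b - t a" if "0 \<le> a" "a \<le> b" "b \<le> 1" for a b
    using cc_le[OF g that] unfolding le_E_def X_def t_def .
  have tmono: "t a \<le> t b" if "0 \<le> a" "a \<le> b" "b \<le> 1" for a b
    using cc_time_mono[OF g that] unfolding t_def .
  have hnn: "0 \<le> h s" if "0 \<le> s" "s \<le> 1" for s
    using leE[of 0 s] that X0 t0 unfolding h_def by simp
  define Z where "Z = {s \<in> {0..1}. h s = 0}"
  have cpZ: "compact Z" unfolding Z_def using level_compact[OF ch] .
  have "h 0 = 0" unfolding h_def using t0 X0 sd_self[OF nzx] by simp
  then have "0 \<in> Z" unfolding Z_def by simp
  then have "Z \<noteq> {}" by blast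
  then obtain s1 where s1: "s1 \<in> Z" "\<forall>s\<in>Z. s \<le> s1" using compact_attains_sup[OF cpZ] by blast
  have s1b: "0 \<le> s1" "s1 \<le> 1" "h s1 = 0" using s1(1) unfolding Z_def by auto
  have h1: "0 < h 1" using lt unfolding lt_E_def h_def t_def X_def tz_def zx_def q_def by simp
  have s1lt: "s1 < 1" using s1b h1 by (cases "s1 = 1") auto
  have hpos: "0 < h s" if "s1 < s" "s \<le> 1" for s
  proof -
    have "s \<notin> Z" using s1(2) that by force
    then have "h s \<noteq> 0" using that s1b unfolding Z_def by simp
    moreover have "0 \<le> h s" using hnn that s1b by simp
    ultimately show ?thesis by simp
  qed
  have L: "sd zx (X s1) = t s1 - tz" using s1b unfolding h_def by simp
  have Lpi: "t s1 - tz < pi"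
  proof -
    have "t s1 - tz \<le> pi" using L sd_le_pi[OF nzx nX[of s1]] by linarith
    moreover have "t s1 - tz \<noteq> pi"
    proof
      assume e: "t s1 - tz = pi"
      then have "X s1 = - zx" using sd_eq_pi[OF nzx nX] L by simp
      then have "D (\<gamma> s1) = ein_sigma (D q)"
        using e unfolding ein_sigma_def X_def t_def zx_def tz_def by (simp add: prod_eq_iff)
      then show False using nc unfolding conjugate_pts_def by blast
    qed
    ultimately show ?thesis by simp
  qed
  have goal: "\<exists>s. s1 < s \<and> s \<le> 1 \<and> \<gamma> s \<in> interior (causal_future D q)"
  proof (cases "t s1 = tz")
    case True
    have "snd (D (\<gamma> 0)) = snd (D (\<gamma> s1))" using True t0 unfolding t_def by simp
    from time_level_const[OF dev g order_refl s1b(1) s1b(2) this]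
    have "\<forall>x\<in>{0..s1}. \<gamma> x = \<gamma> 0" .
    moreover have "s1 \<in> {0..s1}" using s1b by simp
    ultimately have gs1: "\<gamma> s1 = q" unfolding q_def by blast
    obtain W where W: "q \<in> W" "good_nbhd D W" using good_nbhd_exists[OF dev] by blast
    have oW: "open W" using W(2) unfolding good_nbhd_def by blast
    have "\<gamma> s1 \<in> W" using gs1 W(1) by simp
    then obtain \<epsilon> where e: "\<epsilon> > 0" "\<forall>s\<in>{0..1}. \<bar>s - s1\<bar> < \<epsilon> \<longrightarrow> \<gamma> s \<in> W"
      using cont_nbhd[OF cc_cont[OF g] _ oW] s1b by auto
    define s where "s = min 1 (s1 + \<epsilon>/2)"
    have sb: "s1 < s" "s \<le> 1" "\<bar>s - s1\<bar> < \<epsilon>" unfolding s_def using s1lt e(1) by auto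
    have sW: "\<gamma> s \<in> W" using e(2) sb s1b by simp
    have "0 < h s" using hpos sb by simp
    then have "lt_E (D q) (D (\<gamma> s))"
      unfolding lt_E_def h_def t_def X_def zx_def tz_def by simp
    then have "\<gamma> s \<in> interior (causal_future D q)" using good_lt[OF dev W(2) W(1) sW] by blast
    then show ?thesis using sb by blast
  next
    case False
    have ts1: "tz < t s1" using False tmono[of 0 s1] s1b t0 by simp
    define Z2 where "Z2 = {s \<in> {0..1}. t s = t s1}"
    have cpZ2: "compact Z2" unfolding Z2_def using level_compact[OF ct] .
    have "s1 \<in> Z2" unfolding Z2_def using s1b by simp
    then have "Z2 \<noteq> {}" by blast
    then obtain s2 where s2: "s2 \<in> Z2" "\<forall>s\<in>Z2. s2 \<le> s" using compact_attains_inf[OF cpZ2] by blast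
    have s2b: "0 \<le> s2" "s2 \<le> s1" "t s2 = t s1" using s2 \<open>s1 \<in> Z2\<close> unfolding Z2_def by auto
    have "s2 \<noteq> 0" using s2b t0 ts1 by auto
    then have s2pos: "0 < s2" using s2b by simp
    have "snd (D (\<gamma> s2)) = snd (D (\<gamma> s1))" using s2b unfolding t_def by simp
    from time_level_const[OF dev g s2b(1) s2b(2) s1b(2) this]
    have "\<forall>x\<in>{s2..s1}. \<gamma> x = \<gamma> s2" .
    moreover have "s1 \<in> {s2..s1}" using s2b by simp
    ultimately have gs12: "\<gamma> s1 = \<gamma> s2" by blast
    obtain W where W: "\<gamma> s2 \<in> W" "good_nbhd D W" using good_nbhd_exists[OF dev] by blast
    have oW: "open W" using W(2) unfolding good_nbhd_def by blast
    define N1 where "N1 = W \<inter> {u. tz < snd (D u)}"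
    have oN1: "open N1" unfolding N1_def using oW open_time_gt(1)[OF dev] by (rule open_Int)
    have "\<gamma> s2 \<in> N1" unfolding N1_def using W(1) s2b ts1 unfolding t_def by simp
    moreover have s2in: "s2 \<in> {0..1}" using s2b s1b by simp
    ultimately obtain \<epsilon>1 where e1: "\<epsilon>1 > 0" "\<forall>s\<in>{0..1}. \<bar>s - s2\<bar> < \<epsilon>1 \<longrightarrow> \<gamma> s \<in> N1"
      using cont_nbhd[OF cc_cont[OF g] s2in oN1] by blast
    define s' where "s' = max 0 (s2 - \<epsilon>1/2)"
    have s'b: "0 \<le> s'" "s' < s2" "\<bar>s' - s2\<bar> < \<epsilon>1" unfolding s'_def using s2pos e1(1) by auto
    have "\<gamma> s' \<in> N1" using e1(2) s'b s2b s1b by simp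
    then have s'W: "\<gamma> s' \<in> W" and ts': "tz < t s'" unfolding N1_def t_def by auto
    have "s' \<notin> Z2"
    proof
      assume "s' \<in> Z2"
      then have "s2 \<le> s'" using s2(2) by blast
      then show False using s'b by simp
    qed
    then have "t s' \<noteq> t s1" unfolding Z2_def using s'b s2b s1b by simp
    moreover have "t s' \<le> t s1" using tmono[of s' s1] s'b s2b s1b by simp
    ultimately have ts'1: "t s' < t s1" by simp
    define N2 where "N2 = W \<inter> {u. snd (D u) < tz + pi}"
    have oN2: "open N2" unfolding N2_def using oW open_time_gt(2)[OF dev] by (rule open_Int)
    have "\<gamma> s1 \<in> N2" unfolding N2_def using W(1) gs12 Lpi unfolding t_def by simp
    then obtain \<epsilon>2 where e2: "\<epsilon>2 > 0" "\<forall>s\<in>{0..1}. \<bar>s - s1\<bar> < \<epsilon>2 \<longrightarrow> \<gamma> s \<in> N2"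
      using cont_nbhd[OF cc_cont[OF g] _ oN2] s1b by auto
    define s where "s = min 1 (s1 + \<epsilon>2/2)"
    have sb: "s1 < s" "s \<le> 1" "\<bar>s - s1\<bar> < \<epsilon>2" unfolding s_def using s1lt e2(1) by auto
    have "\<gamma> s \<in> N2" using e2(2) sb s1b by simp
    then have sW: "\<gamma> s \<in> W" and tspi: "t s < tz + pi" unfolding N2_def t_def by auto
    have ltss: "lt_E (D (\<gamma> s')) (D (\<gamma> s))"
    proof (rule ccontr)
      assume nlt: "\<not> lt_E (D (\<gamma> s')) (D (\<gamma> s))"
      have d13: "t s - t s' \<le> sd (X s') (X s)" using nlt unfolding lt_E_def t_def X_def by simp
      have l01: "sd zx (X s') \<le> t s' - tz" using leE[of 0 s'] s'b s2b s1b X0 t0 by simp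
      have l12: "sd (X s') (X s1) \<le> t s1 - t s'" using leE[of s' s1] s'b s2b s1b by simp
      have l23: "sd (X s1) (X s) \<le> t s - t s1" using leE[of s1 s] sb s1b by simp
      have tr1: "sd zx (X s1) \<le> sd zx (X s') + sd (X s') (X s1)" using sd_triangle[OF nzx nX nX] .
      have tr2: "sd (X s') (X s) \<le> sd (X s') (X s1) + sd (X s1) (X s)" using sd_triangle[OF nX nX nX] .
      have e1': "sd zx (X s') + sd (X s') (X s1) = sd zx (X s1)" using tr1 l01 l12 L by linarith
      have e12: "sd (X s') (X s1) = t s1 - t s'" using d13 tr2 l12 l23 by linarith
      have e23: "sd (X s1) (X s) = t s - t s1" using d13 tr2 l12 l23 by linarith
      have e2': "sd (X s') (X s1) + sd (X s1) (X s) = sd (X s') (X s)" using d13 tr2 l12 l23 by linarith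
      have e01: "sd zx (X s') = t s' - tz" using e1' e12 L by linarith
      have pos: "0 < sd (X s') (X s1)" using e12 ts'1 by simp
      have sum: "sd zx (X s') + sd (X s') (X s1) + sd (X s1) (X s) < pi" using e01 e12 e23 tspi by linarith
      have "sd zx (X s) = sd zx (X s') + sd (X s') (X s1) + sd (X s1) (X s)"
        by (rule sd_geodesic_cont[OF nzx nX nX nX e1' e2' pos sum])
      then have "h s = 0" unfolding h_def using e01 e12 e23 by linarith
      then show False using hpos[OF sb(1) sb(2)] by simp
    qed
    have "\<gamma> s \<in> interior (causal_future D (\<gamma> s'))" using good_lt[OF dev W(2) s'W sW ltss] .
    moreover have "\<gamma> s' \<in> causal_future D q" unfolding q_def
      using future_sub[OF g order_refl s'b(1)] s'b s2b s1b by simp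
    then have "causal_future D (\<gamma> s') \<subseteq> causal_future D q" using future_trans[OF dev] by blast
    ultimately have "\<gamma> s \<in> interior (causal_future D q)" using interior_mono by blast
    then show ?thesis using sb by blast
  qed
  then obtain s where s: "s1 < s" "s \<le> 1" "\<gamma> s \<in> interior (causal_future D q)" by blast
  have "causal_curve D (\<lambda>r. \<gamma> (s + r * (1 - s)))" using cc_sub[OF g _ s(2) order_refl] s(1) s1b by simp
  from push_up[OF dev this] s(3) show ?thesis unfolding q_def by simp
qed

end


context
  fixes D :: "'m::t2_space \<Rightarrow> (real^'n) \<times> real"
begin

lemma approach_below:
  assumes dev: "developing_map D" and g: "causal_curve D \<gamma>"
    and lt: "snd (D (\<gamma> 0)) < snd (D (\<gamma> 1))" and N: "open N" "\<gamma> 1 \<in> N"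
  shows "\<exists>s. 0 \<le> s \<and> s \<le> 1 \<and> \<gamma> s \<in> N \<and> snd (D (\<gamma> s)) < snd (D (\<gamma> 1))"
proof -
  obtain \<sigma> where s: "0 < \<sigma>" "\<sigma> \<le> 1" "\<gamma> \<sigma> = \<gamma> 1"
      "\<forall>s. 0 \<le> s \<and> s < \<sigma> \<longrightarrow> snd (D (\<gamma> s)) < snd (D (\<gamma> 1))"
    using reach_time[OF dev g lt] by blast
  have sin: "\<sigma> \<in> {0..1}" using s by simp
  have "\<gamma> \<sigma> \<in> N" using s(3) N(2) by simp
  then obtain \<epsilon> where e: "\<epsilon> > 0" "\<forall>s\<in>{0..1}. \<bar>s - \<sigma>\<bar> < \<epsilon> \<longrightarrow> \<gamma> s \<in> N"
    using cont_nbhd[OF cc_cont[OF g] sin N(1)] by blast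
  define a where "a = max 0 (\<sigma> - \<epsilon>/2)"
  have ab: "0 \<le> a" "a < \<sigma>" "\<bar>a - \<sigma>\<bar> < \<epsilon>" unfolding a_def using s(1) e(1) by auto
  have "\<gamma> a \<in> N" using e(2) ab s(2) by simp
  moreover have "snd (D (\<gamma> a)) < snd (D (\<gamma> 1))" using s(4) ab by blast
  ultimately show ?thesis using ab s(2) by (intro exI[of _ a]) simp
qed

lemma main_inj:
  assumes dev: "developing_map D" and gh: "globally_hyperbolic D"
    and nc: "\<forall>p q. \<not> conjugate_pts D p q"
    and q1: "q1 \<in> causal_past D p" and q2: "q2 \<in> causal_past D p" and eq: "D q1 = D q2"
  shows "q1 = q2"
proof -
  define K where "K = (causal_future D q1 \<inter> causal_past D p) \<inter> (causal_future D q2 \<inter> causal_past D p)"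
  have c1: "compact (causal_future D q1 \<inter> causal_past D p)"
    using gh unfolding globally_hyperbolic_def by blast
  have c2: "compact (causal_future D q2 \<inter> causal_past D p)"
    using gh unfolding globally_hyperbolic_def by blast
  have cK: "compact K" unfolding K_def using compact_Int[OF c1 c2] .
  have pK: "p \<in> K" unfolding K_def using q1 q2 future_refl[OF dev, of p] by (simp add: past_iff)
  have ct: "continuous_on K (\<lambda>u. snd (D u))" using cont_time_D[OF dev] continuous_on_subset by blast
  obtain r where rK: "r \<in> K" and rmin: "\<forall>y\<in>K. snd (D r) \<le> snd (D y)"
    using continuous_attains_inf[OF cK _ ct] pK by blast
  have rf1: "r \<in> causal_future D q1" and rf2: "r \<in> causal_future D q2" and rp: "p \<in> causal_future D r"
    using rK unfolding K_def by (auto simp: past_iff)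
  obtain g1 where g1: "causal_curve D g1" "g1 0 = q1" "g1 1 = r" using rf1 unfolding causal_future_def by blast
  obtain g2 where g2: "causal_curve D g2" "g2 0 = q2" "g2 1 = r" using rf2 unfolding causal_future_def by blast
  have below: "False" if "0 \<le> s1" "s1 \<le> 1" "0 \<le> s2" "s2 \<le> 1" "g1 s1 = g2 s2"
      "snd (D (g1 s1)) < snd (D r)" for s1 s2
  proof -
    have a1: "g1 s1 \<in> causal_future D q1" using future_sub[OF g1(1) order_refl that(1) that(2)] g1(2) by simp
    have a2: "g1 s1 \<in> causal_future D q2" using future_sub[OF g2(1) order_refl that(3) that(4)] g2(2) that(5) by simp
    have "r \<in> causal_future D (g1 s1)" using future_sub[OF g1(1) that(1) that(2) order_refl] g1(3) by simp
    then have a3: "p \<in> causal_future D (g1 s1)" using future_trans[OF dev _ rp] by blast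
    have "g1 s1 \<in> K" unfolding K_def using a1 a2 a3 by (simp add: past_iff)
    then have "snd (D r) \<le> snd (D (g1 s1))" using rmin by blast
    then show False using that(6) by simp
  qed
  have tle: "snd (D q1) \<le> snd (D r)" using cc_time_mono[OF g1(1), of 0 1] g1 by simp
  show ?thesis
  proof (cases "snd (D q1) = snd (D r)")
    case True
    have one: "(1::real) \<in> {0..1}" by simp
    have "snd (D (g1 0)) = snd (D (g1 1))" using True g1 by simp
    from time_level_const[OF dev g1(1) order_refl zero_le_one order_refl this]
    have "g1 1 = g1 0" using one by blast
    then have r1: "r = q1" using g1 by simp
    have "snd (D (g2 0)) = snd (D (g2 1))" using True g2 eq by simp
    from time_level_const[OF dev g2(1) order_refl zero_le_one order_refl this]
    have "g2 1 = g2 0" using one by blast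
    then have r2: "r = q2" using g2 by simp
    show ?thesis using r1 r2 by simp
  next
    case False
    then have tlt: "snd (D q1) < snd (D r)" using tle by simp
    have tlt2: "snd (D q2) < snd (D r)" using tlt eq by simp
    have notint: "r \<notin> interior (causal_future D q1)"
    proof
      assume ri: "r \<in> interior (causal_future D q1)"
      have "snd (D (g2 0)) < snd (D (g2 1))" "g2 1 \<in> interior (causal_future D q1)"
        using tlt2 g2 ri by simp_all
      from approach_below[OF dev g2(1) this(1) open_interior this(2)]
      obtain s where s: "0 \<le> s" "s \<le> 1" "g2 s \<in> interior (causal_future D q1)" "snd (D (g2 s)) < snd (D (g2 1))"
        by blast
      have a1: "g2 s \<in> causal_future D q1" using s(3) interior_subset by blast
      have a2: "g2 s \<in> causal_future D q2" using future_sub[OF g2(1) order_refl s(1) s(2)] g2(2) by simp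
      have "r \<in> causal_future D (g2 s)" using future_sub[OF g2(1) s(1) s(2) order_refl] g2(3) by simp
      then have a3: "p \<in> causal_future D (g2 s)" using future_trans[OF dev _ rp] by blast
      have "g2 s \<in> K" unfolding K_def using a1 a2 a3 by (simp add: past_iff)
      then have "snd (D r) \<le> snd (D (g2 s))" using rmin by blast
      then show False using s(4) g2(3) by simp
    qed
    define zx where "zx = fst (D q1)"
    define vx where "vx = fst (D r)"
    define T where "T = snd (D r) - snd (D q1)"
    have nzx: "norm zx = 1" and nvx: "norm vx = 1" unfolding zx_def vx_def using dev_norm[OF dev] by auto
    have "\<not> lt_E (D q1) (D r)"
      using claimB[OF dev nc g1(1)] notint g1 by auto
    moreover have "le_E (D q1) (D r)" using cc_le[OF g1(1), of 0 1] g1 by simp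
    ultimately have dT: "sd zx vx = T" unfolding lt_E_def le_E_def zx_def vx_def T_def by simp
    have Tpi: "T < pi"
    proof -
      have "T \<le> pi" using dT sd_le_pi[OF nzx nvx] by simp
      moreover have "T \<noteq> pi"
      proof
        assume "T = pi"
        then have "vx = - zx" using sd_eq_pi[OF nzx nvx] dT by simp
        then have "D r = ein_sigma (D q1)" using \<open>T = pi\<close>
          unfolding ein_sigma_def vx_def zx_def T_def by (simp add: prod_eq_iff)
        then show False using nc unfolding conjugate_pts_def by blast
      qed
      ultimately show ?thesis by simp
    qed
    obtain W where W: "r \<in> W" "good_nbhd D W" using good_nbhd_exists[OF dev] by blast
    have oW: "open W" and iW: "inj_on D W" using W(2) unfolding good_nbhd_def by auto
    obtain \<sigma>1 where s1: "0 < \<sigma>1" "\<sigma>1 \<le> 1" "g1 \<sigma>1 = r"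
        "\<forall>s. 0 \<le> s \<and> s < \<sigma>1 \<longrightarrow> snd (D (g1 s)) < snd (D r)"
      using reach_time[OF dev g1(1)] tlt g1 by auto
    obtain \<sigma>2 where s2: "0 < \<sigma>2" "\<sigma>2 \<le> 1" "g2 \<sigma>2 = r"
        "\<forall>s. 0 \<le> s \<and> s < \<sigma>2 \<longrightarrow> snd (D (g2 s)) < snd (D r)"
      using reach_time[OF dev g2(1)] tlt2 g2 by auto
    have s1in: "\<sigma>1 \<in> {0..1}" and s2in: "\<sigma>2 \<in> {0..1}" using s1 s2 by auto
    obtain \<epsilon>1 where e1: "\<epsilon>1 > 0" "\<forall>s\<in>{0..1}. \<bar>s - \<sigma>1\<bar> < \<epsilon>1 \<longrightarrow> g1 s \<in> W"
      using cont_nbhd[OF cc_cont[OF g1(1)] s1in oW] s1(3) W(1) by blast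
    obtain \<epsilon>2 where e2: "\<epsilon>2 > 0" "\<forall>s\<in>{0..1}. \<bar>s - \<sigma>2\<bar> < \<epsilon>2 \<longrightarrow> g2 s \<in> W"
      using cont_nbhd[OF cc_cont[OF g2(1)] s2in oW] s2(3) W(1) by blast
    define a1 where "a1 = max 0 (\<sigma>1 - \<epsilon>1/2)"
    define a2 where "a2 = max 0 (\<sigma>2 - \<epsilon>2/2)"
    have a1b: "0 \<le> a1" "a1 < \<sigma>1" "\<sigma>1 - a1 < \<epsilon>1" unfolding a1_def using s1(1) e1(1) by auto
    have a2b: "0 \<le> a2" "a2 < \<sigma>2" "\<sigma>2 - a2 < \<epsilon>2" unfolding a2_def using s2(1) e2(1) by auto
    define \<theta> where "\<theta> = max (snd (D (g1 a1))) (snd (D (g2 a2)))"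
    have th1: "snd (D (g1 a1)) \<le> \<theta>" and th2: "snd (D (g2 a2)) \<le> \<theta>" unfolding \<theta>_def by auto
    have thlt: "\<theta> < snd (D r)" unfolding \<theta>_def using s1(4) a1b s2(4) a2b by auto
    have ct1: "continuous_on {a1..\<sigma>1} (\<lambda>s. snd (D (g1 s)))"
      using continuous_on_subset[OF cc_time_cont[OF g1(1)]] a1b s1(2) by auto
    have ct2: "continuous_on {a2..\<sigma>2} (\<lambda>s. snd (D (g2 s)))"
      using continuous_on_subset[OF cc_time_cont[OF g2(1)]] a2b s2(2) by auto
    obtain u1 where u1: "a1 \<le> u1" "u1 \<le> \<sigma>1" "snd (D (g1 u1)) = \<theta>"
      using IVT'[of "\<lambda>s. snd (D (g1 s))" a1 \<theta> \<sigma>1] th1 thlt s1(3) a1b ct1 by auto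
    obtain u2 where u2: "a2 \<le> u2" "u2 \<le> \<sigma>2" "snd (D (g2 u2)) = \<theta>"
      using IVT'[of "\<lambda>s. snd (D (g2 s))" a2 \<theta> \<sigma>2] th2 thlt s2(3) a2b ct2 by auto
    have u1W: "g1 u1 \<in> W" using e1(2) u1 a1b s1(2) by simp
    have u2W: "g2 u2 \<in> W" using e2(2) u2 a2b s2(2) by simp
    define y1 where "y1 = fst (D (g1 u1))"
    define y2 where "y2 = fst (D (g2 u2))"
    have ny1: "norm y1 = 1" and ny2: "norm y2 = 1" unfolding y1_def y2_def using dev_norm[OF dev] by auto
    have l1a: "sd zx y1 \<le> \<theta> - snd (D q1)"
      using cc_le[OF g1(1), of 0 u1] u1 a1b s1(2) g1(2) unfolding le_E_def zx_def y1_def by simp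
    have l1b: "sd y1 vx \<le> snd (D r) - \<theta>"
      using cc_le[OF g1(1), of u1 1] u1 a1b s1(2) g1(3) unfolding le_E_def vx_def y1_def by simp
    have l2a: "sd zx y2 \<le> \<theta> - snd (D q1)"
      using cc_le[OF g2(1), of 0 u2] u2 a2b s2(2) g2(2) eq unfolding le_E_def zx_def y2_def by simp
    have l2b: "sd y2 vx \<le> snd (D r) - \<theta>"
      using cc_le[OF g2(1), of u2 1] u2 a2b s2(2) g2(3) unfolding le_E_def vx_def y2_def by simp
    have tr1: "sd zx vx \<le> sd zx y1 + sd y1 vx" using sd_triangle[OF nzx ny1 nvx] .
    have tr2: "sd zx vx \<le> sd zx y2 + sd y2 vx" using sd_triangle[OF nzx ny2 nvx] .
    have "y1 = y2"
    proof (rule sd_unique_mid[OF nzx nvx ny1 ny2])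
      show "sd zx vx < pi" using dT Tpi by simp
      show "sd zx y1 = sd zx y2" using l1a l1b l2a l2b tr1 tr2 dT T_def by linarith
      show "sd y1 vx = sd y2 vx" using l1a l1b l2a l2b tr1 tr2 dT T_def by linarith
      show "sd zx y1 + sd y1 vx = sd zx vx" using l1a l1b tr1 dT T_def by linarith
    qed
    then have "D (g1 u1) = D (g2 u2)" using u1(3) u2(3) unfolding y1_def y2_def by (simp add: prod_eq_iff)
    then have "g1 u1 = g2 u2" using iW u1W u2W unfolding inj_on_def by blast
    then have False using below[of u1 u2] u1 u2 a1b a2b s1(2) s2(2) thlt by simp
    then show ?thesis ..
  qed
qed

end


theorem corollary5p2:
  fixes D :: "'m::{t2_space, second_countable_topology} \<Rightarrow> (real^'n) \<times> real"
  assumes "CARD('n) \<ge> 3"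
    and "connected (UNIV :: 'm set)"
    and "developing_map D"
    and "globally_hyperbolic D"
    and "\<forall>p q. \<not> conjugate_pts D p q"
  shows "\<forall>p. inj_on D (causal_past D p)"
proof
  fix p
  show "inj_on D (causal_past D p)"
  proof (rule inj_onI)
    fix q1 q2 assume "q1 \<in> causal_past D p" "q2 \<in> causal_past D p" "D q1 = D q2"
    then show "q1 = q2" using main_inj[OF assms(3) assms(4) assms(5)] by blast
  qed
qed

end
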